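(* Fix $n\ge 1$ and fixed vectors $\mathbf v_0,\dots,\mathbf v_{n+1}\in\mathbb R^d$. For every edge-factored scoring function $f_G:\mathbb R^d\times\mathbb R^d\to\mathbb R$ there exist arc-eager scoring functions $f_{\mathsf{sh}},f_{\mathsf{re}_\curvearrowleft},f_{\mathsf{ra}},f_{\mathsf{re}}:\mathbb R^d\times\mathbb R^d\to\mathbb R$ such that for every projective dependency tree $T$ on $w_0,\dots,w_n$ rooted at $w_0$, the arc-eager score of $T$ equals its edge-factored score $\sum_{(h,m)\in T} f_G(\mathbf v_h,\mathbf v_m)$. (That is, the arc-eager model contains the edge-factored model.)
   Context: Sentence $w_1,\dots,w_n$ with $w_0=\mathrm{ROOT}$ and $w_{n+1}$ an end-of-sentence marker; each position $i$ has a feature vector $\mathbf v_i\in\mathbb R^d$ (bi-LSTM outputs, treated as fixed). A dependency tree is a set of arcs $(h,m)$ (head $h$, modifier $m$). Its edge-factored score under $f_G$ is $\sum_{(h,m)}f_G(\mathbf v_h,\mathbf v_m)$. Arc-eager deduction system (items $[i^b,j]$ with $0\le i<j\le n+1$, $b\in\{0,1\}$; each item carries a score). Axiom: $[0^0,1]$ with score $0$. Rules: - sh: from $[i^b,j]:v$ with $j\le n$ derive $[j^0,j+1]:0$. - ra: from $[i^b,j]:v$ with $j\le n$ derive $[j^1,j+1]:0$. - $\mathsf{re}_\curvearrowleft$: from $[k^b,i]:v_1$ and $[i^0,j]:v_2$ derive $[k^b,j]:v_1+v_2+f_{\mathsf{sh}}(\mathbf v_k,\mathbf v_i)+f_{\mathsf{re}_\curvearrowleft}(\mathbf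 v_i,\mathbf v_j)$; this application adds the arc $(j,i)$ ($w_i$ left-modifies $w_j$). - re: from $[k^b,i]:v_1$ and $[i^1,j]:v_2$ derive $[k^b,j]:v_1+v_2+f_{\mathsf{ra}}(\mathbf v_k,\mathbf v_i)+f_{\mathsf{re}}(\mathbf v_i,\mathbf v_j)$; this application adds the arc $(k,i)$ ($w_i$ right-modifies $w_k$). Goal: $[0^0,n+1]$. A derivation of the goal encodes the dependency tree consisting of all arcs added by its $\mathsf{re}_\curvearrowleft$ and re applications, and its score is the score of the goal item computed by the rules. The arc-eager score of a tree $T$ is the maximum score over all goal derivations encoding $T$. *)

theory Defs
  imports "HOL-Analysis.Analysis"
begin

type_synonym 'd scorefn = "real ^ 'd \<Rightarrow> real ^ 'd \<Rightarrow> real"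

text \<open>Arc-eager deduction system.
  \<open>ae_derives n v fsh frel fra fre (i, b, j) s A\<close> holds iff there is a derivation
  of the item \<open>[i^b, j]\<close> (b = False: superscript 0, b = True: superscript 1) whose
  computed score is \<open>s\<close> and whose reduce applications add exactly the arc set \<open>A\<close>
  (arcs are pairs (head, modifier)).  The premise of sh / ra only serves as a side
  condition: the derived item gets score 0 and carries no arcs.\<close>
inductive ae_derives ::
  "nat \<Rightarrow> (nat \<Rightarrow> real ^ 'd) \<Rightarrow> 'd scorefn \<Rightarrow> 'd scorefn \<Rightarrow> 'd scorefn \<Rightarrow> 'd scorefn
   \<Rightarrow> nat \<times> bool \<times> nat \<Rightarrow> real \<Rightarrow> (nat \<times> nat) set \<Rightarrow> bool"
  for n v fsh frel fra fre where
  ax: "ae_derives n v fsh frel fra fre (0, False, 1) 0 {}"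
| sh: "ae_derives n v fsh frel fra fre (i, b, j) s A \<Longrightarrow> j \<le> n \<Longrightarrow>
       ae_derives n v fsh frel fra fre (j, False, j + 1) 0 {}"
| ra: "ae_derives n v fsh frel fra fre (i, b, j) s A \<Longrightarrow> j \<le> n \<Longrightarrow>
       ae_derives n v fsh frel fra fre (j, True, j + 1) 0 {}"
| reL: "ae_derives n v fsh frel fra fre (k, b, i) s1 A1 \<Longrightarrow>
        ae_derives n v fsh frel fra fre (i, False, j) s2 A2 \<Longrightarrow>
        ae_derives n v fsh frel fra fre (k, b, j)
          (s1 + s2 + fsh (v k) (v i) + frel (v i) (v j)) (A1 \<union> A2 \<union> {(j, i)})"
| re: "ae_derives n v fsh frel fra fre (k, b, i) s1 A1 \<Longrightarrow>
       ae_derives n v fsh frel fra fre (i, True, j) s2 A2 \<Longrightarrow>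
       ae_derives n v fsh frel fra fre (k, b, j)
         (s1 + s2 + fra (v k) (v i) + fre (v i) (v j)) (A1 \<union> A2 \<union> {(k, i)})"

definition ae_scores ::
  "nat \<Rightarrow> (nat \<Rightarrow> real ^ 'd) \<Rightarrow> 'd scorefn \<Rightarrow> 'd scorefn \<Rightarrow> 'd scorefn \<Rightarrow> 'd scorefn
   \<Rightarrow> (nat \<times> nat) set \<Rightarrow> real set" where
  "ae_scores n v fsh frel fra fre T = {s. ae_derives n v fsh frel fra fre (0, False, n + 1) s T}"

text \<open>\<open>E\<close> is the arc-eager score of T: the maximum over goal derivations encoding T
  (in particular such a derivation exists and the maximum is attained).\<close>
definition is_arc_eager_score ::
  "nat \<Rightarrow> (nat \<Rightarrow> real ^ 'd) \<Rightarrow> 'd scorefn \<Rightarrow> 'd scorefn \<Rightarrow> 'd scorefn \<Rightarrow> 'd scorefn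
   \<Rightarrow> (nat \<times> nat) set \<Rightarrow> real \<Rightarrow> bool" where
  "is_arc_eager_score n v fsh frel fra fre T E \<longleftrightarrow>
     E \<in> ae_scores n v fsh frel fra fre T \<and> (\<forall>s \<in> ae_scores n v fsh frel fra fre T. s \<le> E)"

definition edge_score :: "(nat \<Rightarrow> real ^ 'd) \<Rightarrow> 'd scorefn \<Rightarrow> (nat \<times> nat) set \<Rightarrow> real" where
  "edge_score v fG T = (\<Sum>(h, m) \<in> T. fG (v h) (v m))"

definition proj_dep_tree :: "nat \<Rightarrow> (nat \<times> nat) set \<Rightarrow> bool" where
  "proj_dep_tree n T \<longleftrightarrow>
     T \<subseteq> {0..n} \<times> {1..n} \<and>
     (\<forall>m \<in> {1..n}. \<exists>!h. (h, m) \<in> T) \<and>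
     (\<forall>m \<in> {1..n}. (0, m) \<in> T\<^sup>+) \<and>
     (\<forall>(h, m) \<in> T. \<forall>k. min h m < k \<and> k < max h m \<longrightarrow> (h, k) \<in> T\<^sup>+)"

end

theory Submission
  imports Defs
begin

lemma score_inv:
  fixes fG :: "real ^ 'd \<Rightarrow> real ^ 'd \<Rightarrow> real"
  assumes "ae_derives n v (\<lambda>_ _. 0) (\<lambda>x y. fG y x) fG (\<lambda>_ _. 0) it s A"
  shows "fst it < snd (snd it) \<and> finite A \<and> (\<forall>p\<in>A. fst it < snd p \<and> snd p < snd (snd it))
         \<and> s = edge_score v fG A"
  using assms
proof (induction rule: ae_derives.induct)
  case ax
  then show ?case by (simp add: edge_score_def)
next
  case (sh i b j s A)
  then show ?case by (simp add: edge_score_def)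
next
  case (ra i b j s A)
  then show ?case by (simp add: edge_score_def)
next
  case (reL k b i s1 A1 j s2 A2)
  have d1: "A1 \<inter> A2 = {}" using reL.IH by fastforce
  have d2: "(j, i) \<notin> A1 \<union> A2" using reL.IH by fastforce
  have fin: "finite A1" "finite A2" using reL.IH by auto
  have "edge_score v fG (A1 \<union> A2 \<union> {(j, i)}) = edge_score v fG A1 + edge_score v fG A2 + fG (v j) (v i)"
    unfolding edge_score_def using d1 d2 fin
    by (simp add: sum.union_disjoint)
  then show ?case using reL.IH by fastforce
next
  case (re k b i s1 A1 j s2 A2)
  have d1: "A1 \<inter> A2 = {}" using re.IH by fastforce
  have d2: "(k, i) \<notin> A1 \<union> A2" using re.IH by fastforce
  have fin: "finite A1" "finite A2" using re.IH by auto
  have "edge_score v fG (A1 \<union> A2 \<union> {(k, i)}) = edge_score v fG A1 + edge_score v fG A2 + fG (v k) (v i)"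
    unfolding edge_score_def using d1 d2 fin
    by (simp add: sum.union_disjoint)
  then show ?case using re.IH by fastforce
qed

locale ptree =
  fixes n :: nat and T :: "(nat \<times> nat) set"
  assumes sub: "T \<subseteq> {0..n} \<times> {1..n}"
  and uniq: "\<And>h h' m. (h, m) \<in> T \<Longrightarrow> (h', m) \<in> T \<Longrightarrow> h = h'"
  and reach: "\<And>m. m \<in> {1..n} \<Longrightarrow> (0, m) \<in> T\<^sup>+"
  and proj: "\<And>h m k. (h, m) \<in> T \<Longrightarrow> min h m < k \<Longrightarrow> k < max h m \<Longrightarrow> (h, k) \<in> T\<^sup>+"
begin

lemma lastedge: "(h, i) \<in> T\<^sup>+ \<Longrightarrow> (p, i) \<in> T \<Longrightarrow> (h, p) \<in> T\<^sup>*"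
  by (metis tranclD2 uniq)

lemma cyc_back: "(y, z) \<in> T\<^sup>+ \<Longrightarrow> (z, z) \<in> T\<^sup>+ \<Longrightarrow> (z, y) \<in> T\<^sup>+"
proof (induction rule: trancl_induct)
  case (base z)
  then have "(z, y) \<in> T\<^sup>*" using lastedge by blast
  then show ?case using base.prems by (metis rtrancl_eq_or_trancl)
next
  case (step a z)
  have za: "(z, a) \<in> T\<^sup>*" using lastedge step.prems step.hyps(2) by blast
  have "(a, a) \<in> T\<^sup>+" using za step.hyps(2)
    by (meson r_into_trancl' rtrancl_into_trancl2 trancl_rtrancl_trancl)
  then have "(a, y) \<in> T\<^sup>+" using step.IH by blast
  then show ?case using za by (meson rtrancl_trancl_trancl)
qed

lemma acyc: "(x, x) \<notin> T\<^sup>+"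
proof
  assume c: "(x, x) \<in> T\<^sup>+"
  then obtain p where "(p, x) \<in> T" by (meson tranclD2)
  then have "x \<in> {1..n}" using sub by auto
  then have "(0, x) \<in> T\<^sup>+" by (rule reach)
  then have "(x, 0) \<in> T\<^sup>+" using cyc_back c by blast
  then obtain q where "(q, 0) \<in> T" by (meson tranclD2)
  then show False using sub by auto
qed

lemma entry: "(a, m) \<in> T\<^sup>+ \<Longrightarrow> a \<notin> S \<Longrightarrow> m \<in> S \<Longrightarrow> \<exists>x y. (x, y) \<in> T \<and> x \<notin> S \<and> y \<in> S"
proof (induction rule: trancl_induct)
  case (base y)
  then show ?case by blast
next
  case (step y z)
  then show ?case by blast
qed

definition Good :: "nat \<Rightarrow> nat \<Rightarrow> bool" where
  "Good k j \<longleftrightarrow> (\<forall>h m. (h, m) \<in> T \<longrightarrow> k < m \<longrightarrow> m < j \<longrightarrow> k \<le> h \<and> h \<le> j)"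

lemma nocross_good:
  assumes g: "Good k j" and ki: "k < i" and ij: "i < j"
    and nc: "\<And>h m. (h, m) \<in> T \<Longrightarrow> k < m \<Longrightarrow> m < j \<Longrightarrow> m \<noteq> i \<Longrightarrow> min h m < i \<Longrightarrow> i < max h m \<Longrightarrow> False"
  shows "Good k i" "Good i j"
proof -
  show "Good k i" unfolding Good_def
  proof (intro allI impI)
    fix h m assume hm: "(h, m) \<in> T" "k < m" "m < i"
    have "k \<le> h \<and> h \<le> j" using g hm ij unfolding Good_def by auto
    moreover have "\<not> h > i" using nc[OF hm(1) hm(2)] hm ij by fastforce
    ultimately show "k \<le> h \<and> h \<le> i" by auto
  qed
  show "Good i j" unfolding Good_def
  proof (intro allI impI)
    fix h m assume hm: "(h, m) \<in> T" "i < m" "m < j"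
    have "k \<le> h \<and> h \<le> j" using g hm ki unfolding Good_def by auto
    moreover have "\<not> h < i" using nc[OF hm(1)] hm ki by fastforce
    ultimately show "i \<le> h \<and> h \<le> j" by auto
  qed
qed

lemma split:
  assumes kj: "k + 1 < j" and jn: "j \<le> n + 1" and g: "Good k j"
  obtains i where "k < i" "i < j" "(k, i) \<in> T \<or> (j, i) \<in> T" "Good k i" "Good i j"
proof -
  define L where "L = {m. k < m \<and> m < j \<and> (k, m) \<in> T}"
  define R where "R = {m. k < m \<and> m < j \<and> (j, m) \<in> T}"
  have "k + 1 \<in> {1..n}" using kj jn by auto
  then have "(0, k + 1) \<in> T\<^sup>+" by (rule reach)
  then obtain x y where xy: "(x, y) \<in> T" "x \<notin> {k<..<j}" "y \<in> {k<..<j}"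
    using entry[of 0 "k+1" "{k<..<j}"] kj by auto
  then have "x = k \<or> x = j" using g unfolding Good_def by fastforce
  then have LR: "L \<noteq> {} \<or> R \<noteq> {}" using xy unfolding L_def R_def by auto
  have finL: "finite L" "finite R" unfolding L_def R_def by auto
  show ?thesis
  proof (cases "L \<noteq> {}")
    case True
    define i where "i = Max L"
    have iL: "i \<in> L" using True finL i_def by simp
    have imax: "\<And>m. m \<in> L \<Longrightarrow> m \<le> i" using finL i_def by simp
    have ki: "k < i" "i < j" "(k, i) \<in> T" using iL L_def by auto
    have nc: False if hm: "(h, m) \<in> T" "k < m" "m < j" "m \<noteq> i" "min h m < i" "i < max h m" for h m
    proof -
      have hb: "k \<le> h" "h \<le> j" using g hm unfolding Good_def by auto
      have "(h, i) \<in> T\<^sup>+" using proj hm by blast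
      then have hk: "(h, k) \<in> T\<^sup>*" using lastedge ki(3) by blast
      have hnk: "h \<noteq> k"
      proof
        assume "h = k"
        then have "m \<in> L" "i < m" using hm unfolding L_def by auto
        then show False using imax by fastforce
      qed
      then have hk': "(h, k) \<in> T\<^sup>+" using hk by (metis rtrancl_eq_or_trancl)
      have "(k, h) \<in> T\<^sup>*"
      proof (cases "m < i")
        case True
        then have "(k, m) \<in> T\<^sup>+" using proj[OF ki(3), of m] hm by auto
        then show ?thesis using lastedge hm(1) by blast
      next
        case False
        then have "h < i" using hm by auto
        then have "(k, h) \<in> T\<^sup>+" using proj[OF ki(3), of h] hb hnk by auto
        then show ?thesis by auto
      qed
      then have "(k, k) \<in> T\<^sup>+" using hk' by (meson rtrancl_trancl_trancl)
      then show False using acyc by blast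
    qed
    have "Good k i" "Good i j" using nocross_good[OF g ki(1) ki(2)] nc by blast+
    then show ?thesis using that ki by blast
  next
    case False
    then have RNE: "R \<noteq> {}" using LR by auto
    define i where "i = Min R"
    have iR: "i \<in> R" using RNE finL i_def by simp
    have imin: "\<And>m. m \<in> R \<Longrightarrow> i \<le> m" using finL i_def by simp
    have ki: "k < i" "i < j" "(j, i) \<in> T" using iR R_def by auto
    have nc: False if hm: "(h, m) \<in> T" "k < m" "m < j" "m \<noteq> i" "min h m < i" "i < max h m" for h m
    proof -
      have hb: "k \<le> h" "h \<le> j" using g hm unfolding Good_def by auto
      have "(h, i) \<in> T\<^sup>+" using proj hm by blast
      then have hk: "(h, j) \<in> T\<^sup>*" using lastedge ki(3) by blast
      have hnk: "h \<noteq> j"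
      proof
        assume "h = j"
        then have "m \<in> R" "m < i" using hm unfolding R_def by auto
        then show False using imin by fastforce
      qed
      then have hk': "(h, j) \<in> T\<^sup>+" using hk by (metis rtrancl_eq_or_trancl)
      have "(j, h) \<in> T\<^sup>*"
      proof (cases "m > i")
        case True
        then have "(j, m) \<in> T\<^sup>+" using proj[OF ki(3), of m] hm by auto
        then show ?thesis using lastedge hm(1) by blast
      next
        case False
        then have "h > i" using hm by auto
        then have "(j, h) \<in> T\<^sup>+" using proj[OF ki(3), of h] hb hnk by auto
        then show ?thesis by auto
      qed
      then have "(j, j) \<in> T\<^sup>+" using hk' by (meson rtrancl_trancl_trancl)
      then show False using acyc by blast
    qed
    have "Good k i" "Good i j" using nocross_good[OF g ki(1) ki(2)] nc by blast+
    then show ?thesis using that ki by blast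
  qed
qed

definition Arcs :: "nat \<Rightarrow> nat \<Rightarrow> (nat \<times> nat) set" where
  "Arcs k j = {p \<in> T. k < snd p \<and> snd p < j}"

lemma ends: "1 \<le> k \<Longrightarrow> k \<le> n + 1 \<Longrightarrow> \<exists>i b s A. ae_derives n v fsh frel fra fre (i, b, k) s A"
proof (induction k)
  case 0
  then show ?case by simp
next
  case (Suc k)
  show ?case
  proof (cases "k = 0")
    case True
    then show ?thesis using ae_derives.ax by fastforce
  next
    case False
    then obtain i b s A where "ae_derives n v fsh frel fra fre (i, b, k) s A" using Suc by auto
    then have "ae_derives n v fsh frel fra fre (k, False, k + 1) 0 {}"
      using ae_derives.sh Suc.prems by fastforce
    then show ?thesis by auto
  qed
qed

lemma base_item: "k \<le> n \<Longrightarrow> (1 \<le> k \<or> b = False) \<Longrightarrow> ae_derives n v fsh frel fra fre (k, b, k + 1) 0 {}"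
proof (cases "1 \<le> k")
  case True
  assume "k \<le> n"
  then obtain i b' s A where d: "ae_derives n v fsh frel fra fre (i, b', k) s A" using ends True by fastforce
  show ?thesis
  proof (cases b)
    case True then show ?thesis using ae_derives.ra[OF d] \<open>k \<le> n\<close> by simp
  next
    case False then show ?thesis using ae_derives.sh[OF d] \<open>k \<le> n\<close> by simp
  qed
next
  case False
  assume "1 \<le> k \<or> b = False"
  then have "k = 0" "b = False" using False by auto
  then show ?thesis using ae_derives.ax[of n v fsh frel fra fre] by simp
qed

lemma exist:
  "k < j \<Longrightarrow> j \<le> n + 1 \<Longrightarrow> (1 \<le> k \<or> b = False) \<Longrightarrow> Good k j \<Longrightarrow>
   \<exists>s. ae_derives n v fsh frel fra fre (k, b, j) s (Arcs k j)"
proof (induction "j - k" arbitrary: k j b rule: less_induct)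
  case less
  show ?case
  proof (cases "j = k + 1")
    case True
    have "Arcs k j = {}" unfolding Arcs_def using True by auto
    have "ae_derives n v fsh frel fra fre (k, b, k + 1) 0 {}"
      using base_item[of k b] less.prems True by auto
    then show ?thesis using \<open>Arcs k j = {}\<close> True by auto
  next
    case False
    then have kj: "k + 1 < j" using less.prems by auto
    obtain i where i: "k < i" "i < j" "(k, i) \<in> T \<or> (j, i) \<in> T" "Good k i" "Good i j"
      using split[OF kj less.prems(2) less.prems(4)] by blast
    have lt1: "i - k < j - k" "j - i < j - k" using i(1,2) by arith+
    have "\<exists>s1. ae_derives n v fsh frel fra fre (k, b, i) s1 (Arcs k i)"
      apply (rule less.hyps) using i less.prems lt1 by auto
    then obtain s1 where d1: "ae_derives n v fsh frel fra fre (k, b, i) s1 (Arcs k i)" by blast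
    have split_arcs: "Arcs k j = Arcs k i \<union> Arcs i j \<union> {(h, i)}" if "(h, i) \<in> T" for h
    proof (rule set_eqI)
      fix p :: "nat \<times> nat"
      obtain a c where p: "p = (a, c)" by fastforce
      have u: "(a, i) \<in> T \<Longrightarrow> a = h" using uniq that by blast
      show "p \<in> Arcs k j \<longleftrightarrow> p \<in> Arcs k i \<union> Arcs i j \<union> {(h, i)}"
        unfolding Arcs_def p using that i(1,2) u by (cases "c < i"; cases "c = i"; auto)
    qed
    show ?thesis
    proof (cases "(k, i) \<in> T")
      case True
      obtain s2 where d2: "ae_derives n v fsh frel fra fre (i, True, j) s2 (Arcs i j)"
        apply atomize_elim apply (rule less.hyps) using i less.prems lt1 by auto
      show ?thesis using ae_derives.re[OF d1 d2] split_arcs[OF True] by auto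
    next
      case False
      then have ji: "(j, i) \<in> T" using i by auto
      obtain s2 where d2: "ae_derives n v fsh frel fra fre (i, False, j) s2 (Arcs i j)"
        apply atomize_elim apply (rule less.hyps) using i less.prems lt1 by auto
      show ?thesis using ae_derives.reL[OF d1 d2] split_arcs[OF ji] by auto
    qed
  qed
qed

end

theorem lemma1:
  fixes n :: nat and v :: "nat \<Rightarrow> real ^ 'd" and fG :: "real ^ 'd \<Rightarrow> real ^ 'd \<Rightarrow> real"
  assumes "n \<ge> 1"
  shows "\<exists>fsh frel fra fre :: real ^ 'd \<Rightarrow> real ^ 'd \<Rightarrow> real.
           \<forall>T. proj_dep_tree n T \<longrightarrow>
             is_arc_eager_score n v fsh frel fra fre T (edge_score v fG T)"
proof (intro exI allI impI)
  fix T assume pt: "proj_dep_tree n T"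
  interpret ptree n T
  proof
    show "T \<subseteq> {0..n} \<times> {1..n}" using pt unfolding proj_dep_tree_def by blast
  next
    fix h h' m assume "(h, m) \<in> T" "(h', m) \<in> T"
    moreover have "m \<in> {1..n}" using pt calculation unfolding proj_dep_tree_def by blast
    ultimately show "h = h'" using pt unfolding proj_dep_tree_def by blast
  next
    fix m :: nat assume "m \<in> {1..n}"
    then show "(0, m) \<in> T\<^sup>+" using pt unfolding proj_dep_tree_def by blast
  next
    fix h m k assume "(h, m) \<in> T" "min h m < k" "k < max h m"
    then show "(h, k) \<in> T\<^sup>+" using pt unfolding proj_dep_tree_def by blast
  qed
  have AT: "Arcs 0 (n + 1) = T" using sub unfolding Arcs_def by auto
  have G: "Good 0 (n + 1)" using sub unfolding Good_def by auto
  obtain s where d: "ae_derives n v (\<lambda>_ _. 0) (\<lambda>x y. fG y x) fG (\<lambda>_ _. 0) (0, False, n + 1) s T"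
    using exist[of 0 "n+1" False v "\<lambda>_ _. 0" "\<lambda>x y. fG y x" fG "\<lambda>_ _. 0"] G AT by auto
  have "\<And>s. s \<in> ae_scores n v (\<lambda>_ _. 0) (\<lambda>x y. fG y x) fG (\<lambda>_ _. 0) T \<Longrightarrow> s = edge_score v fG T"
    unfolding ae_scores_def using score_inv by fastforce
  moreover have "s \<in> ae_scores n v (\<lambda>_ _. 0) (\<lambda>x y. fG y x) fG (\<lambda>_ _. 0) T"
    unfolding ae_scores_def using d by simp
  ultimately show "is_arc_eager_score n v (\<lambda>_ _. 0) (\<lambda>x y. fG y x) fG (\<lambda>_ _. 0) T (edge_score v fG T)"
    unfolding is_arc_eager_score_def by fastforce
qed

end
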